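(* Let $A \in \mathbb{R}^{m\times n}$ be semimonotone, i.e. $A^{\dagger}\geq 0$, and let $A=U-V$ be a proper weak regular splitting of type II of $A$. Suppose that $\rho(U^{\dagger}V)>0$. Then there exists a vector $x\in\mathbb{R}^n$ with $x\geq 0$, $x\neq 0$, such that $U^{\dagger}Vx=\rho(U^{\dagger}V)x$, $Ax\geq 0$ with $Ax\neq 0$, and $Vx\geq 0$ with $Vx\neq 0$.
   Context: $A^{\dagger}$ denotes the Moore–Penrose inverse and $\rho(\cdot)$ the spectral radius. Inequalities between matrices/vectors are entrywise. A splitting $A=U-V$ (with $U,V$ of the same size as $A$) is proper if $R(U)=R(A)$ and $N(U)=N(A)$ (range and null space). A proper splitting $A=U-V$ is a proper weak regular splitting of type II if $U^{\dagger}\geq 0$ and $VU^{\dagger}\geq 0$. *)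

theory Defs
  imports "HOL-Analysis.Analysis"
begin

definition nonneg_mat :: "real^'n^'m \<Rightarrow> bool" where
  "nonneg_mat A \<longleftrightarrow> (\<forall>i j. 0 \<le> A $ i $ j)"

definition nonneg_vec :: "real^'n \<Rightarrow> bool" where
  "nonneg_vec x \<longleftrightarrow> (\<forall>i. 0 \<le> x $ i)"

definition moore_penrose :: "real^'n^'m \<Rightarrow> real^'m^'n" where
  "moore_penrose A = (THE X. A ** X ** A = A \<and> X ** A ** X = X \<and>
      transpose (A ** X) = A ** X \<and> transpose (X ** A) = X ** A)"

definition complexify :: "real^'n^'m \<Rightarrow> complex^'n^'m" where
  "complexify A = (\<chi> i j. complex_of_real (A $ i $ j))"

definition spectral_radius :: "real^'n^'n \<Rightarrow> real" where
  "spectral_radius A = Max {cmod z | z. \<exists>v. v \<noteq> 0 \<and> complexify A *v v = z *s v}"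

definition mat_range :: "real^'n^'m \<Rightarrow> (real^'m) set" where
  "mat_range A = range (\<lambda>x. A *v x)"

definition mat_null :: "real^'n^'m \<Rightarrow> (real^'n) set" where
  "mat_null A = {x. A *v x = 0}"

definition proper_splitting :: "real^'n^'m \<Rightarrow> real^'n^'m \<Rightarrow> real^'n^'m \<Rightarrow> bool" where
  "proper_splitting A U V \<longleftrightarrow> A = U - V \<and> mat_range U = mat_range A \<and> mat_null U = mat_null A"

definition proper_weak_regular_II :: "real^'n^'m \<Rightarrow> real^'n^'m \<Rightarrow> real^'n^'m \<Rightarrow> bool" where
  "proper_weak_regular_II A U V \<longleftrightarrow> proper_splitting A U V \<and>
     nonneg_mat (moore_penrose U) \<and> nonneg_mat (V ** moore_penrose U)"

end

theory Submission
  imports Defs "Jordan_Normal_Form.Char_Poly"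
begin

no_notation scalar_prod (infix "\<bullet>" 70)
no_notation vec_index (infixl "$" 100)
hide_const (open) Matrix.orthogonal
hide_fact (open) Matrix.orthogonal_def


definition proj :: "'a::euclidean_space set \<Rightarrow> 'a \<Rightarrow> 'a" where
  "proj S x = (THE y. y \<in> span S \<and> (\<forall>w\<in>span S. orthogonal (x - y) w))"

context fixes S :: "'a::euclidean_space set" begin

lemma proj_ex1: "\<exists>!y. y \<in> span S \<and> (\<forall>w\<in>span S. orthogonal (x - y) w)"
proof -
  obtain y z where y: "y \<in> span S" and z: "\<And>w. w \<in> span S \<Longrightarrow> orthogonal z w" and xyz: "x = y + z"
    using orthogonal_subspace_decomp_exists[of S x] by blast
  show ?thesis
  proof (rule ex1I[of _ y])
    show "y \<in> span S \<and> (\<forall>w\<in>span S. orthogonal (x - y) w)" using y z xyz by simp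
  next
    fix y' assume h: "y' \<in> span S \<and> (\<forall>w\<in>span S. orthogonal (x - y') w)"
    have d: "y' - y \<in> span S" using h y by (simp add: span_diff)
    have "orthogonal (x - y') (y' - y)" using h d by blast
    moreover have "orthogonal z (y' - y)" using z d by blast
    ultimately have "orthogonal ((x - y) - (x - y')) (y' - y)"
      using xyz unfolding orthogonal_def by (simp add: inner_diff_left inner_add_left)
    moreover have "(x - y) - (x - y') = y' - y" by simp
    ultimately have "orthogonal (y' - y) (y' - y)" by metis
    thus "y' = y" by (simp add: orthogonal_def)
  qed
qed

lemma proj_both: "proj S x \<in> span S \<and> (\<forall>w\<in>span S. orthogonal (x - proj S x) w)"
  unfolding proj_def by (rule theI'[OF proj_ex1])

lemma proj_prop: "proj S x \<in> span S" "\<And>w. w \<in> span S \<Longrightarrow> orthogonal (x - proj S x) w"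
  using proj_both[of x] by auto

lemma proj_unique: assumes "y \<in> span S" "\<And>w. w\<in>span S \<Longrightarrow> orthogonal (x - y) w" shows "proj S x = y"
proof -
  have "y \<in> span S \<and> (\<forall>w\<in>span S. orthogonal (x - y) w)" using assms by blast
  with proj_both[of x] proj_ex1[of x] show ?thesis by (metis (no_types, lifting))
qed

lemma proj_id: "x \<in> span S \<Longrightarrow> proj S x = x"
  by (rule proj_unique) (auto simp: orthogonal_def)

lemma proj_sym: "proj S x \<bullet> z = x \<bullet> proj S z"
proof -
  have "proj S x \<bullet> (z - proj S z) = 0"
    using proj_prop(2)[of "proj S x" z] proj_prop(1)[of x] by (simp add: orthogonal_def inner_commute)
  moreover have "(x - proj S x) \<bullet> proj S z = 0"
    using proj_prop(2)[of "proj S z" x] proj_prop(1)[of z] by (simp add: orthogonal_def)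
  ultimately show ?thesis by (simp add: inner_diff_left inner_diff_right)
qed

lemma proj_linear: "linear (proj S)"
proof (rule linearI)
  fix x y
  show "proj S (x + y) = proj S x + proj S y"
  proof (rule proj_unique)
    show "proj S x + proj S y \<in> span S" using proj_prop(1) by (simp add: span_add)
    fix w assume w: "w \<in> span S"
    show "orthogonal (x + y - (proj S x + proj S y)) w"
      using proj_prop(2)[OF w, of x] proj_prop(2)[OF w, of y]
      by (simp add: orthogonal_def inner_diff_left inner_add_left algebra_simps)
  qed
next
  fix c :: real and x
  show "proj S (c *\<^sub>R x) = c *\<^sub>R proj S x"
  proof (rule proj_unique)
    show "c *\<^sub>R proj S x \<in> span S" using proj_prop(1) by (simp add: span_mul)
    fix w assume w: "w \<in> span S"
    show "orthogonal (c *\<^sub>R x - c *\<^sub>R proj S x) w"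
      using proj_prop(2)[OF w, of x]
      by (simp add: orthogonal_def inner_diff_left algebra_simps)
  qed
qed

end

lemma sym_matrix:
  fixes M :: "real^'n^'n"
  assumes "\<And>x y. (M *v x) \<bullet> y = x \<bullet> (M *v y)"
  shows "transpose M = M"
proof -
  have "adjoint ((*v) M) = (*v) M" by (rule adjoint_unique) (use assms in auto)
  hence "\<forall>x. transpose M *v x = M *v x" using adjoint_matrix[of M] by metis
  thus ?thesis by (simp add: matrix_eq)
qed

definition mpf :: "real^'n^'m \<Rightarrow> real^'m \<Rightarrow> real^'n" where
  "mpf A y = (let K = {x. A *v x = 0} in (THE x. x \<in> {x. \<forall>k\<in>K. orthogonal k x} \<and> A *v x = proj (range ((*v) A)) y))"

lemma mpf_ex1:
  fixes A :: "real^'n^'m"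
  assumes "z \<in> range ((*v) A)"
  shows "\<exists>!x. x \<in> {x. \<forall>k\<in>{x. A *v x = 0}. orthogonal k x} \<and> A *v x = z"
proof -
  let ?K = "{x. A *v x = 0}"
  have spK: "span ?K = ?K"
    using span_eq_iff[THEN iffD2, OF linear_subspace_kernel[OF matrix_vector_mul_linear[of A]]] by simp
  obtain x0 where x0: "z = A *v x0" using assms by auto
  define q where "q = x0 - proj ?K x0"
  have pK: "proj ?K x0 \<in> ?K" using proj_prop(1)[of ?K x0] spK by simp
  have Aq: "A *v q = z" using pK x0 by (simp add: q_def matrix_vector_mult_diff_distrib)
  have qo: "\<forall>k\<in>?K. orthogonal k q" using proj_prop(2)[of _ ?K x0] spK
    by (auto simp: q_def orthogonal_commute)
  show ?thesis
  proof (rule ex1I[of _ q])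
    show "q \<in> {x. \<forall>k\<in>?K. orthogonal k x} \<and> A *v q = z" using Aq qo by auto
  next
    fix y assume h: "y \<in> {x. \<forall>k\<in>?K. orthogonal k x} \<and> A *v y = z"
    have "y - q \<in> ?K" using h Aq by (simp add: matrix_vector_mult_diff_distrib)
    hence "orthogonal (y - q) y" "orthogonal (y - q) q" using h qo by auto
    hence "orthogonal (y - q) (y - q)" by (simp add: orthogonal_def inner_diff_right)
    thus "y = q" by (simp add: orthogonal_def)
  qed
qed

lemma mpf_prop:
  fixes A :: "real^'n^'m"
  shows "\<forall>k. A *v k = 0 \<longrightarrow> orthogonal k (mpf A y)" "A *v mpf A y = proj (range ((*v) A)) y"
proof -
  have sp: "span (range ((*v) A)) = range ((*v) A)"
    using span_eq_iff[THEN iffD2, OF linear_subspace_image[OF matrix_vector_mul_linear[of A] subspace_UNIV]] by simp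
  have "proj (range ((*v) A)) y \<in> range ((*v) A)" using proj_prop(1) sp by metis
  from theI'[OF mpf_ex1[OF this]] show "\<forall>k. A *v k = 0 \<longrightarrow> orthogonal k (mpf A y)" "A *v mpf A y = proj (range ((*v) A)) y"
    unfolding mpf_def Let_def by auto
qed


lemma mpf_unique:
  fixes A :: "real^'n^'m"
  assumes "\<forall>k. A *v k = 0 \<longrightarrow> orthogonal k z" "A *v z = proj (range ((*v) A)) y"
  shows "mpf A y = z"
proof -
  have sp: "span (range ((*v) A)) = range ((*v) A)"
    using span_eq_iff[THEN iffD2, OF linear_subspace_image[OF matrix_vector_mul_linear[of A] subspace_UNIV]] by simp
  have "proj (range ((*v) A)) y \<in> range ((*v) A)" using proj_prop(1) sp by metis
  from mpf_ex1[OF this] have "\<exists>!x. (\<forall>k. A *v k = 0 \<longrightarrow> orthogonal k x) \<and> A *v x = proj (range ((*v) A)) y"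
    by simp
  with mpf_prop[of A y] assms show ?thesis by metis
qed

lemma mpf_linear: "linear (mpf (A::real^'n^'m))"
proof (rule linearI)
  fix x y
  show "mpf A (x + y) = mpf A x + mpf A y"
    using mpf_prop[of A x] mpf_prop[of A y] linear_add[OF proj_linear[of "range ((*v) A)"], symmetric]
    by (intro mpf_unique) (auto simp: orthogonal_def inner_add_right matrix_vector_right_distrib)
next
  fix c :: real and x
  show "mpf A (c *\<^sub>R x) = c *\<^sub>R mpf A x"
    using mpf_prop[of A x] linear_scale[OF proj_linear[of "range ((*v) A)"], symmetric]
    by (intro mpf_unique) (auto simp: orthogonal_def matrix_vector_mult_scaleR)
qed

lemma mp_exists:
  fixes A :: "real^'n^'m"
  shows "\<exists>X. A ** X ** A = A \<and> X ** A ** X = X \<and>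
      transpose (A ** X) = A ** X \<and> transpose (X ** A) = X ** A"
proof -
  let ?P = "proj (range ((*v) A))"
  let ?K = "{x. A *v x = 0}"
  define X where "X = matrix (mpf A)"
  have Xv: "X *v y = mpf A y" for y
    using matrix_vector_mul(2)[OF mpf_linear[of A]] unfolding X_def by metis
  have sp: "span (range ((*v) A)) = range ((*v) A)"
    using span_eq_iff[THEN iffD2, OF linear_subspace_image[OF matrix_vector_mul_linear[of A] subspace_UNIV]] by simp
  have spK: "span ?K = ?K"
    using span_eq_iff[THEN iffD2, OF linear_subspace_kernel[OF matrix_vector_mul_linear[of A]]] by simp
  have AX: "A *v (X *v y) = ?P y" for y using Xv mpf_prop by simp
  have XA: "X *v (A *v x) = x - proj ?K x" for x
  proof -
    have pK: "proj ?K x \<in> ?K" using proj_prop(1)[of ?K x] spK by simp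
    have "A *v x \<in> span (range ((*v) A))" by (rule span_base) simp
    hence "?P (A *v x) = A *v x" by (rule proj_id)
    hence "mpf A (A *v x) = x - proj ?K x"
      using pK proj_prop(2)[of _ ?K x] spK
      by (intro mpf_unique) (auto simp: matrix_vector_mult_diff_distrib orthogonal_commute)
    thus ?thesis using Xv by simp
  qed
  have 1: "A ** X ** A = A"
    unfolding matrix_eq
  proof
    fix x
    have "A *v x \<in> span (range ((*v) A))" by (rule span_base) simp
    hence "?P (A *v x) = A *v x" by (rule proj_id)
    thus "(A ** X ** A) *v x = A *v x" using AX by (simp add: matrix_vector_mul_assoc[symmetric])
  qed
  have 2: "X ** A ** X = X"
    unfolding matrix_eq
  proof
    fix y
    have "proj ?K (X *v y) = 0"
    proof (rule proj_unique)
      show "0 \<in> span ?K" by (rule span_0)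
      fix w assume "w \<in> span ?K" hence "A *v w = 0" unfolding spK by simp
      thus "orthogonal (X *v y - 0) w" using mpf_prop(1)[of A y] by (simp add: Xv orthogonal_commute)
    qed
    thus "(X ** A ** X) *v y = X *v y" using XA by (simp add: matrix_vector_mul_assoc[symmetric])
  qed
  have 3: "transpose (A ** X) = A ** X"
    by (rule sym_matrix) (simp add: matrix_vector_mul_assoc[symmetric] AX proj_sym)
  have 4: "transpose (X ** A) = X ** A"
    by (rule sym_matrix) (simp add: matrix_vector_mul_assoc[symmetric] XA proj_sym inner_diff_left inner_diff_right)
  show ?thesis using 1 2 3 4 by blast
qed


lemma mp_unique:
  fixes A :: "real^'n^'m"
  assumes X: "A ** X ** A = A" "X ** A ** X = X" "transpose (A ** X) = A ** X" "transpose (X ** A) = X ** A"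
    and Y: "A ** Y ** A = A" "Y ** A ** Y = Y" "transpose (A ** Y) = A ** Y" "transpose (Y ** A) = Y ** A"
  shows "X = Y"
proof -
  have "X = X ** (A ** X)" using X(2) by (simp add: matrix_mul_assoc)
  also have "\<dots> = X ** transpose (A ** X)" using X(3) by simp
  also have "\<dots> = X ** transpose (A ** Y ** A ** X)" using Y(1) by simp
  also have "\<dots> = X ** (transpose (A ** X) ** transpose (A ** Y))"
    by (simp add: matrix_transpose_mul matrix_mul_assoc)
  also have "\<dots> = X ** A ** X ** A ** Y" using X(3) Y(3) by (simp add: matrix_mul_assoc)
  also have "\<dots> = X ** A ** Y" using X(2) by simp
  finally have 1: "X = X ** A ** Y" .
  have "Y = (Y ** A) ** Y" using Y(2) by simp
  also have "\<dots> = transpose (Y ** A) ** Y" using Y(4) by simp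
  also have "\<dots> = transpose (Y ** (A ** X ** A)) ** Y" using X(1) by simp
  also have "\<dots> = (transpose (X ** A) ** transpose (Y ** A)) ** Y"
    by (simp add: matrix_transpose_mul matrix_mul_assoc)
  also have "\<dots> = X ** A ** (Y ** A ** Y)" using X(4) Y(4) by (simp add: matrix_mul_assoc)
  also have "\<dots> = X ** A ** Y" using Y(2) by simp
  finally have 2: "Y = X ** A ** Y" .
  show ?thesis using 1 2 by simp
qed

lemma mp_props:
  fixes A :: "real^'n^'m"
  shows "A ** moore_penrose A ** A = A" "moore_penrose A ** A ** moore_penrose A = moore_penrose A"
     "transpose (A ** moore_penrose A) = A ** moore_penrose A"
     "transpose (moore_penrose A ** A) = moore_penrose A ** A"
proof -
  have "\<exists>!X. A ** X ** A = A \<and> X ** A ** X = X \<and>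
      transpose (A ** X) = A ** X \<and> transpose (X ** A) = X ** A"
    using mp_exists[of A] mp_unique[of A] by blast
  from theI'[OF this] show "A ** moore_penrose A ** A = A" "moore_penrose A ** A ** moore_penrose A = moore_penrose A"
     "transpose (A ** moore_penrose A) = A ** moore_penrose A"
     "transpose (moore_penrose A ** A) = moore_penrose A ** A"
    unfolding moore_penrose_def by auto
qed



lemma mv_nth: "(B *v y) $ i = (\<Sum>j\<in>UNIV. B $ i $ j * y $ j)"
  by (simp add: matrix_vector_mult_def)

lemma mv_mono:
  fixes B :: "real^'k^'m"
  assumes "nonneg_mat B" "\<And>j. y $ j \<le> z $ j"
  shows "(B *v y) $ i \<le> (B *v z) $ i"
  unfolding mv_nth using assms unfolding nonneg_mat_def
  by (intro sum_mono mult_left_mono) auto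

lemma mv_nonneg:
  fixes B :: "real^'k^'m"
  assumes "nonneg_mat B" "nonneg_vec y"
  shows "0 \<le> (B *v y) $ i"
  unfolding mv_nth using assms unfolding nonneg_mat_def nonneg_vec_def
  by (intro sum_nonneg mult_nonneg_nonneg) auto

lemma pf_brouwer:
  fixes B :: "real^'k^'k"
  assumes nonneg: "nonneg_mat B" and r: "r > 0" and w: "nonneg_vec w" "w \<noteq> 0"
    and Bw: "\<And>i. r * w $ i \<le> (B *v w) $ i"
  shows "\<exists>y s. nonneg_vec y \<and> y \<noteq> 0 \<and> B *v y = s *s y \<and> r \<le> s"
proof -
  define S where "S = {y::real^'k. (\<forall>i. 0 \<le> y $ i) \<and> (\<Sum>i\<in>UNIV. y $ i) = 1 \<and> (\<forall>i. r * y $ i \<le> (\<Sum>j\<in>UNIV. B $ i $ j * y $ j))}"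
  define f where "f y = (1 / (\<Sum>i\<in>UNIV. (B *v y) $ i)) *\<^sub>R (B *v y)" for y :: "real^'k"
  have sumpos: "(\<Sum>i\<in>UNIV. (B *v y) $ i) \<ge> r" if "y \<in> S" for y
  proof -
    have "r = r * (\<Sum>i\<in>UNIV. y $ i)" using that unfolding S_def by simp
    also have "\<dots> = (\<Sum>i\<in>UNIV. r * y $ i)" by (simp add: sum_distrib_left)
    also have "\<dots> \<le> (\<Sum>i\<in>UNIV. (B *v y) $ i)" using that unfolding S_def mv_nth by (intro sum_mono) auto
    finally show ?thesis .
  qed
  have closed: "closed S"
    unfolding S_def
    by (intro closed_Collect_conj closed_Collect_all closed_Collect_le closed_Collect_eq continuous_intros)
  have bnd: "bounded S"
  proof -
    have "S \<subseteq> cball 0 (real CARD('k))"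
    proof
      fix y assume y: "y \<in> S"
      have le1: "y $ i \<le> 1" for i
      proof -
        have "y $ i \<le> (\<Sum>j\<in>UNIV. y $ j)"
          using y unfolding S_def by (intro member_le_sum) auto
        thus ?thesis using y unfolding S_def by simp
      qed
      have "norm y \<le> (\<Sum>i\<in>UNIV. \<bar>y $ i\<bar>)" by (rule norm_le_l1_cart)
      also have "\<dots> \<le> (\<Sum>i\<in>(UNIV::'k set). 1)" using le1 y unfolding S_def
        by (intro sum_mono) auto
      finally show "y \<in> cball 0 (real CARD('k))" by simp
    qed
    thus ?thesis using bounded_cball bounded_subset by blast
  qed
  have cmp: "compact S" using closed bnd by (simp add: compact_eq_bounded_closed)
  have cvx: "convex S"
    unfolding convex_def
  proof (intro ballI allI impI)
    fix x y :: "real^'k" and u v :: real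
    assume x: "x \<in> S" and y: "y \<in> S" and uv: "0 \<le> u" "0 \<le> v" "u + v = 1"
    show "u *\<^sub>R x + v *\<^sub>R y \<in> S"
      unfolding S_def
    proof (intro CollectI conjI allI)
      fix i
      show "0 \<le> (u *\<^sub>R x + v *\<^sub>R y) $ i" using x y uv unfolding S_def by simp
      have "r * (u *\<^sub>R x + v *\<^sub>R y) $ i = u * (r * x $ i) + v * (r * y $ i)" by (simp add: algebra_simps)
      also have "\<dots> \<le> u * (\<Sum>j\<in>UNIV. B $ i $ j * x $ j) + v * (\<Sum>j\<in>UNIV. B $ i $ j * y $ j)"
        using x y uv unfolding S_def by (intro add_mono mult_left_mono) auto
      also have "\<dots> = (\<Sum>j\<in>UNIV. B $ i $ j * (u *\<^sub>R x + v *\<^sub>R y) $ j)"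
        by (simp add: sum_distrib_left sum.distrib algebra_simps)
      finally show "r * (u *\<^sub>R x + v *\<^sub>R y) $ i \<le> (\<Sum>j\<in>UNIV. B $ i $ j * (u *\<^sub>R x + v *\<^sub>R y) $ j)" .
    next
      show "(\<Sum>i\<in>UNIV. (u *\<^sub>R x + v *\<^sub>R y) $ i) = 1"
        using x y uv unfolding S_def by (simp add: sum.distrib sum_distrib_left[symmetric])
    qed
  qed
  have ne: "S \<noteq> {}"
  proof -
    define t where "t = (\<Sum>i\<in>UNIV. w $ i)"
    obtain k where k: "w $ k \<noteq> 0" using w(2) by (metis Finite_Cartesian_Product.vec_eq_iff Finite_Cartesian_Product.zero_index)
    have "w $ k \<le> t" unfolding t_def using w(1) unfolding nonneg_vec_def by (intro member_le_sum) auto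
    hence t: "t > 0" using k w(1) unfolding nonneg_vec_def by (metis less_eq_real_def order_less_le_trans)
    have "(1/t) *\<^sub>R w \<in> S" unfolding S_def
    proof (intro CollectI conjI allI)
      fix i
      show "0 \<le> ((1/t) *\<^sub>R w) $ i" using t w(1) unfolding nonneg_vec_def by simp
      have "r * ((1/t) *\<^sub>R w) $ i = (1/t) * (r * w $ i)" by simp
      also have "\<dots> \<le> (1/t) * (B *v w) $ i" using Bw[of i] t by (intro mult_left_mono) auto
      also have "\<dots> = (\<Sum>j\<in>UNIV. B $ i $ j * ((1/t) *\<^sub>R w) $ j)"
        unfolding mv_nth by (simp add: sum_distrib_left algebra_simps)
      finally show "r * ((1/t) *\<^sub>R w) $ i \<le> (\<Sum>j\<in>UNIV. B $ i $ j * ((1/t) *\<^sub>R w) $ j)" .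
    next
      show "(\<Sum>i\<in>UNIV. ((1/t) *\<^sub>R w) $ i) = 1" using t by (simp add: t_def sum_divide_distrib[symmetric])
    qed
    thus ?thesis by auto
  qed
  have cont: "continuous_on S f"
    unfolding f_def mv_nth
    by (intro continuous_intros) (use sumpos r in \<open>fastforce simp: mv_nth\<close>)
  have fS: "f \<in> S \<rightarrow> S"
  proof
    fix y assume y: "y \<in> S"
    define c where "c = 1 / (\<Sum>i\<in>UNIV. (B *v y) $ i)"
    have c: "c > 0" using sumpos[OF y] r unfolding c_def by simp
    have yn: "nonneg_vec y" using y unfolding S_def nonneg_vec_def by simp
    have fy: "f y = c *\<^sub>R (B *v y)" unfolding f_def c_def by simp
    show "f y \<in> S" unfolding S_def
    proof (intro CollectI conjI allI)
      fix i
      show "0 \<le> f y $ i" using fy c mv_nonneg[OF nonneg yn] by simp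
      have "r * f y $ i = c * (B *v (r *\<^sub>R y)) $ i"
        unfolding fy by (simp add: mv_nth sum_distrib_left algebra_simps)
      also have "\<dots> \<le> c * (B *v (B *v y)) $ i"
        using y c unfolding S_def
        by (intro mult_left_mono mv_mono[OF nonneg]) (auto simp: mv_nth)
      also have "\<dots> = (\<Sum>j\<in>UNIV. B $ i $ j * f y $ j)"
        unfolding fy by (simp add: mv_nth sum_distrib_left algebra_simps)
      finally show "r * f y $ i \<le> (\<Sum>j\<in>UNIV. B $ i $ j * f y $ j)" .
    next
      have "(\<Sum>i\<in>UNIV. f y $ i) = c * (\<Sum>i\<in>UNIV. (B *v y) $ i)"
        unfolding fy by (simp add: sum_distrib_left)
      thus "(\<Sum>i\<in>UNIV. f y $ i) = 1" using c unfolding c_def by simp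
    qed
  qed
  obtain y where y: "y \<in> S" and fxp: "f y = y" using brouwer[OF cmp cvx ne cont fS] by blast
  define s where "s = (\<Sum>i\<in>UNIV. (B *v y) $ i)"
  have s: "s \<ge> r" using sumpos[OF y] unfolding s_def .
  have "B *v y = s *s y"
  proof -
    have "y = (1/s) *\<^sub>R (B *v y)" using fxp unfolding f_def s_def by simp
    from arg_cong[where f="\<lambda>z. s *\<^sub>R z", OF this]
    have "s *\<^sub>R y = (s * (1/s)) *\<^sub>R (B *v y)" by (simp only: scaleR_scaleR)
    hence "s *\<^sub>R y = B *v y" using s r by simp
    thus ?thesis by (simp add: scalar_mult_eq_scaleR)
  qed
  moreover have "nonneg_vec y" using y unfolding S_def nonneg_vec_def by simp
  moreover have "y \<noteq> 0" using y unfolding S_def by auto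
  ultimately show ?thesis using s by blast
qed




lemma hma_jnf_mv:
  fixes M :: "'b::comm_ring_1^'k^'k"
  assumes h: "bij_betw h {0..<CARD('k)} (UNIV::'k set)" and i: "i < CARD('k)" and w: "dim_vec w = CARD('k)"
  shows "vec_index (Matrix.mat CARD('k) CARD('k) (\<lambda>(i,j). M $ h i $ h j) *\<^sub>v w) i
     = (\<Sum>j<CARD('k). M $ h i $ h j * vec_index w j)"
  using i w by (simp add: scalar_prod_def atLeast0LessThan)

lemma hma_mv_reindex:
  fixes M :: "'b::comm_ring_1^'k^'k"
  assumes h: "bij_betw h {0..<CARD('k)} (UNIV::'k set)"
  shows "(M *v v) $ x = (\<Sum>j<CARD('k). M $ x $ h j * v $ h j)"
  unfolding matrix_vector_mult_def
  using sum.reindex_bij_betw[OF h, of "\<lambda>k. M $ x $ k * v $ k"] by (simp add: atLeast0LessThan)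

lemma eig_fin_ne:
  fixes M :: "complex^'k^'k"
  shows "finite {z. \<exists>v. v \<noteq> 0 \<and> M *v v = z *s v}" "{z. \<exists>v. v \<noteq> 0 \<and> M *v v = z *s v} \<noteq> {}"
proof -
  let ?N = "CARD('k)"
  obtain h where h: "bij_betw h {0..<?N} (UNIV::'k set)"
    using ex_bij_betw_nat_finite[of "UNIV::'k set"] by auto
  define J where "J = Matrix.mat ?N ?N (\<lambda>(i,j). M $ h i $ h j)"
  have J: "J \<in> carrier_mat ?N ?N" unfolding J_def by simp
  have Jv: "vec_index (J *\<^sub>v w) i = (\<Sum>j<?N. M $ h i $ h j * vec_index w j)" if "i < ?N" "dim_vec w = ?N" for w i
    unfolding J_def using hma_jnf_mv[OF h that] .
  have sub: "{z. \<exists>v. v \<noteq> 0 \<and> M *v v = z *s v} \<subseteq> {k. poly (char_poly J) k = 0}"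
  proof
    fix z assume "z \<in> {z. \<exists>v. v \<noteq> 0 \<and> M *v v = z *s v}"
    then obtain v where v0: "v \<noteq> 0" and ev: "M *v v = z *s v" by auto
    define tv where "tv = Matrix.vec ?N (\<lambda>i. v $ h i)"
    have "eigenvector J tv z" unfolding eigenvector_def
    proof (intro conjI)
      show "tv \<in> carrier_vec (dim_row J)" using J unfolding tv_def by simp
      obtain x where x: "v $ x \<noteq> 0" using v0 by (metis Finite_Cartesian_Product.vec_eq_iff Finite_Cartesian_Product.zero_index)
      obtain i where i: "i < ?N" "h i = x" using h unfolding bij_betw_def by (metis atLeastLessThan_iff image_iff UNIV_I)
      show "tv \<noteq> 0\<^sub>v (dim_row J)"
      proof
        assume "tv = 0\<^sub>v (dim_row J)"
        hence "vec_index tv i = 0" using i J by simp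
        thus False using i x unfolding tv_def by simp
      qed
      show "J *\<^sub>v tv = z \<cdot>\<^sub>v tv"
      proof (rule eq_vecI)
        fix i assume "i < dim_vec (z \<cdot>\<^sub>v tv)"
        hence i: "i < ?N" unfolding tv_def by simp
        have "vec_index (J *\<^sub>v tv) i = (\<Sum>j<?N. M $ h i $ h j * v $ h j)"
          using Jv[OF i, of tv] by (simp add: tv_def)
        also have "\<dots> = (M *v v) $ h i" using hma_mv_reindex[OF h, of M v "h i"] by simp
        also have "\<dots> = z * v $ h i" using ev by simp
        finally show "vec_index (J *\<^sub>v tv) i = vec_index (z \<cdot>\<^sub>v tv) i" using i by (simp add: tv_def)
      qed (use J in \<open>simp add: tv_def\<close>)
    qed
    thus "z \<in> {k. poly (char_poly J) k = 0}"
      using eigenvalue_root_char_poly[OF J] unfolding eigenvalue_def by auto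
  qed
  from degree_monic_char_poly[OF J] have d: "degree (char_poly J) = ?N" "coeff (char_poly J) ?N = 1" by auto
  hence "char_poly J \<noteq> 0" by auto
  from poly_roots_finite[OF this] sub show "finite {z. \<exists>v. v \<noteq> 0 \<and> M *v v = z *s v}"
    using finite_subset by blast
  have "\<not> constant (poly (char_poly J))" using d by (simp add: constant_degree)
  from fundamental_theorem_of_algebra[OF this] obtain k where "poly (char_poly J) k = 0" by auto
  hence "eigenvalue J k" using eigenvalue_root_char_poly[OF J] by auto
  then obtain w where w: "eigenvector J w k" unfolding eigenvalue_def by auto
  hence wc: "w \<in> carrier_vec ?N" and w0: "w \<noteq> 0\<^sub>v ?N" and Jw: "J *\<^sub>v w = k \<cdot>\<^sub>v w"
    unfolding eigenvector_def using J by auto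
  define g where "g = the_inv_into {0..<?N} h"
  have hg: "h (g x) = x" "g x < ?N" for x
  proof -
    show "h (g x) = x" unfolding g_def by (rule f_the_inv_into_f_bij_betw[OF h UNIV_I])
    have "g x \<in> {0..<?N}" unfolding g_def by (rule bij_betw_apply[OF bij_betw_the_inv_into[OF h] UNIV_I])
    thus "g x < ?N" by simp
  qed
  have gh: "g (h i) = i" if "i < ?N" for i
    using h that unfolding g_def by (auto simp: bij_betw_def the_inv_into_f_f)
  define v where "v = (\<chi> x. vec_index w (g x))"
  have vh: "v $ h i = vec_index w i" if "i < ?N" for i using gh[OF that] unfolding v_def by simp
  have "v \<noteq> 0"
  proof
    assume v: "v = 0"
    have "w = 0\<^sub>v ?N"
    proof (rule eq_vecI)
      fix i assume "i < dim_vec (0\<^sub>v ?N :: complex vec)"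
      hence "i < ?N" by simp
      thus "vec_index w i = vec_index (0\<^sub>v ?N) i" using vh[of i] v by simp
    qed (use wc in auto)
    thus False using w0 by simp
  qed
  moreover have "M *v v = k *s v"
  proof (subst Finite_Cartesian_Product.vec_eq_iff, rule allI)
    fix x
    have "(M *v v) $ x = (\<Sum>j<?N. M $ h (g x) $ h j * v $ h j)" using hma_mv_reindex[OF h] hg by simp
    also have "\<dots> = (\<Sum>j<?N. M $ h (g x) $ h j * vec_index w j)" using vh by simp
    also have "\<dots> = vec_index (J *\<^sub>v w) (g x)" using Jv[OF hg(2), of w] wc by simp
    also have "\<dots> = k * vec_index w (g x)" using Jw hg(2) wc by simp
    also have "\<dots> = (k *s v) $ x" unfolding v_def by simp
    finally show "(M *v v) $ x = (k *s v) $ x" .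
  qed
  ultimately show "{z. \<exists>v. v \<noteq> 0 \<and> M *v v = z *s v} \<noteq> {}" by auto
qed




definition cvec :: "real^'k \<Rightarrow> complex^'k" where "cvec x = (\<chi> i. complex_of_real (x $ i))"

lemma complexify_mult: "complexify (X ** Y) = complexify X ** complexify Y"
  unfolding complexify_def matrix_matrix_mult_def
  by (simp add: Finite_Cartesian_Product.vec_eq_iff)

lemma complexify_mv: "complexify M *v cvec x = cvec (M *v x)"
  unfolding complexify_def cvec_def matrix_vector_mult_def
  by (simp add: Finite_Cartesian_Product.vec_eq_iff)

lemma sym_inner:
  fixes M :: "real^'n^'n"
  assumes "transpose M = M"
  shows "(M *v a) \<bullet> b = a \<bullet> (M *v b)"
proof -
  have "a \<bullet> adjoint ((*v) M) b = (M *v a) \<bullet> b"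
    by (rule adjoint_clauses(1)) (rule matrix_vector_mul_linear)
  thus ?thesis using adjoint_matrix[of M] assms by simp
qed

lemma sr_facts:
  fixes C :: "real^'n^'n"
  shows "\<exists>\<mu> u. u \<noteq> 0 \<and> complexify C *v u = \<mu> *s u \<and> cmod \<mu> = spectral_radius C"
    "\<And>z v. v \<noteq> 0 \<Longrightarrow> complexify C *v v = z *s v \<Longrightarrow> cmod z \<le> spectral_radius C"
proof -
  let ?E = "{z. \<exists>v. v \<noteq> 0 \<and> complexify C *v v = z *s v}"
  have eq: "{cmod z | z. \<exists>v. v \<noteq> 0 \<and> complexify C *v v = z *s v} = cmod ` ?E" by (rule setcompr_eq_image)
  have fin: "finite (cmod ` ?E)" by (rule finite_imageI[OF eig_fin_ne(1)[of "complexify C"]])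
  have ne: "cmod ` ?E \<noteq> {}" using eig_fin_ne(2)[of "complexify C"] by simp
  have sr: "spectral_radius C = Max (cmod ` ?E)" unfolding spectral_radius_def eq ..
  obtain \<mu> where m2: "Max (cmod ` ?E) = cmod \<mu>" and m1: "\<mu> \<in> ?E"
    using Max_in[OF fin ne] by (rule imageE)
  from m1 have "\<exists>v. v \<noteq> 0 \<and> complexify C *v v = \<mu> *s v" by simp
  then obtain u where u: "u \<noteq> 0 \<and> complexify C *v u = \<mu> *s u" ..
  show "\<exists>\<mu> u. u \<noteq> 0 \<and> complexify C *v u = \<mu> *s u \<and> cmod \<mu> = spectral_radius C"
    by (rule exI[of _ \<mu>], rule exI[of _ u]) (use u m2 sr in simp)
  fix z v assume "v \<noteq> 0" "complexify C *v v = z *s v"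
  hence "z \<in> ?E" by (intro CollectI exI[of _ v] conjI)
  hence "cmod z \<in> cmod ` ?E" by (rule imageI)
  thus "cmod z \<le> spectral_radius C" unfolding sr by (rule Max_ge[OF fin])
qed

theorem lemma3p10:
  fixes A U V :: "real^'n^'m"
  assumes "nonneg_mat (moore_penrose A)"
    and "proper_weak_regular_II A U V"
    and "spectral_radius (moore_penrose U ** V) > 0"
  shows "\<exists>x :: real^'n. nonneg_vec x \<and> x \<noteq> 0 \<and>
           (moore_penrose U ** V) *v x = spectral_radius (moore_penrose U ** V) *s x \<and>
           nonneg_vec (A *v x) \<and> A *v x \<noteq> 0 \<and>
           nonneg_vec (V *v x) \<and> V *v x \<noteq> 0"
proof -
  define U' where "U' = moore_penrose U"
  define A' where "A' = moore_penrose A"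
  define C where "C = U' ** V"
  define B where "B = V ** U'"
  define \<rho> where "\<rho> = spectral_radius C"
  have A'nn: "nonneg_mat A'" using assms(1) unfolding A'_def .
  have split: "A = U - V" "mat_range U = mat_range A" "mat_null U = mat_null A"
    and U'nn: "nonneg_mat U'" and Bnn: "nonneg_mat B"
    using assms(2) unfolding proper_weak_regular_II_def proper_splitting_def U'_def B_def by auto
  have rho: "\<rho> > 0" using assms(3) unfolding \<rho>_def C_def U'_def .
  note mpU = mp_props[of U, folded U'_def]
  note mpA = mp_props[of A, folded A'_def]
  obtain \<mu> u where u0: "u \<noteq> 0" and Cu: "complexify C *v u = \<mu> *s u" and mu: "cmod \<mu> = \<rho>"
    using sr_facts(1)[of C] unfolding \<rho>_def by blast
  define z where "z = complexify V *v u"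
  have Uz: "complexify U' *v z = \<mu> *s u"
    using Cu unfolding z_def C_def complexify_mult by (simp add: matrix_vector_mul_assoc)
  have mu0: "\<mu> \<noteq> 0" using mu rho by auto
  have z0: "z \<noteq> 0"
  proof
    assume "z = 0"
    hence "\<mu> *s u = 0" using Uz by simp
    thus False using mu0 u0 by (simp add: Finite_Cartesian_Product.vec_eq_iff)
  qed
  have Bz: "complexify B *v z = \<mu> *s z"
    unfolding B_def complexify_mult
    by (simp add: matrix_vector_mul_assoc[symmetric] Uz vector_scalar_commute z_def[symmetric])
  define w where "w = (\<chi> i. cmod (z $ i))"
  have wnn: "nonneg_vec w" unfolding w_def nonneg_vec_def by simp
  have w0: "w \<noteq> 0"
  proof
    assume "w = 0"
    hence "\<forall>i. z $ i = 0" unfolding w_def by (simp add: Finite_Cartesian_Product.vec_eq_iff)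
    thus False using z0 by (simp add: Finite_Cartesian_Product.vec_eq_iff)
  qed
  have Bw: "\<rho> * w $ i \<le> (B *v w) $ i" for i
  proof -
    have "\<rho> * w $ i = cmod ((complexify B *v z) $ i)" using Bz mu unfolding w_def by (simp add: norm_mult)
    also have "\<dots> = cmod (\<Sum>j\<in>UNIV. complex_of_real (B $ i $ j) * z $ j)"
      unfolding complexify_def matrix_vector_mult_def by simp
    also have "\<dots> \<le> (\<Sum>j\<in>UNIV. cmod (complex_of_real (B $ i $ j) * z $ j))" by (rule norm_sum)
    also have "\<dots> = (B *v w) $ i"
      using Bnn unfolding matrix_vector_mult_def w_def nonneg_mat_def by (simp add: norm_mult)
    finally show ?thesis .
  qed
  obtain y s where ynn: "nonneg_vec y" and y0: "y \<noteq> 0" and By: "B *v y = s *s y" and rs: "\<rho> \<le> s"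
    using pf_brouwer[OF Bnn rho wnn w0 Bw] by blast
  have s0: "s > 0" using rho rs by simp
  define x where "x = U' *v y"
  have xnn: "nonneg_vec x" unfolding x_def nonneg_vec_def using mv_nonneg[OF U'nn ynn] by simp
  have Vx: "V *v x = s *s y" using By unfolding x_def B_def by (simp add: matrix_vector_mul_assoc)
  have x0: "x \<noteq> 0"
  proof
    assume "x = 0"
    hence "s *s y = 0" using Vx by simp
    thus False using s0 y0 by (simp add: Finite_Cartesian_Product.vec_eq_iff)
  qed
  have Cx: "C *v x = s *s x"
    unfolding C_def x_def
    by (simp only: matrix_vector_mul_assoc[symmetric]) (simp add: Vx[unfolded x_def] vector_scalar_commute)
  have "cmod (complex_of_real s) \<le> \<rho>"
  proof -
    have "cvec x \<noteq> 0" using x0 unfolding cvec_def by (simp add: Finite_Cartesian_Product.vec_eq_iff)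
    moreover have "complexify C *v cvec x = complex_of_real s *s cvec x"
      unfolding complexify_mv Cx by (simp add: cvec_def Finite_Cartesian_Product.vec_eq_iff)
    ultimately show ?thesis using sr_facts(2)[of "cvec x" C] unfolding \<rho>_def by blast
  qed
  hence "s \<le> \<rho>" using s0 by simp
  hence s_eq: "s = \<rho>" using rs by simp
  have "A *v x \<in> range ((*v) U)" using split(2) unfolding mat_range_def by simp
  then obtain x' where x': "A *v x = U *v x'" by (rule rangeE)
  have yU: "y = U *v ((1/\<rho>) *s (x - x'))"
  proof -
    have "V *v x = U *v x - A *v x" using split(1) by (simp add: matrix_vector_mult_diff_rdistrib)
    hence "s *s y = U *v (x - x')" using Vx x' by (simp add: matrix_vector_mult_diff_distrib)
    hence "(1/\<rho>) *s (s *s y) = (1/\<rho>) *s (U *v (x - x'))" by simp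
    hence "y = (1/\<rho>) *s (U *v (x - x'))" using s_eq rho by simp
    thus ?thesis by (simp only: vector_scalar_commute)
  qed
  define t where "t = (1/\<rho>) *s (x - x')"
  have yt: "y = U *v t" using yU unfolding t_def .
  have "U *v x = U *v (U' *v (U *v t))" unfolding x_def using yt by simp
  also have "\<dots> = (U ** U' ** U) *v t" by (simp add: matrix_vector_mul_assoc matrix_mul_assoc)
  also have "\<dots> = y" using mpU(1) yt by simp
  finally have UU'y: "U *v x = y" .
  have "A *v x = U *v x - V *v x" using split(1) by (simp add: matrix_vector_mult_diff_rdistrib)
  also have "\<dots> = y - \<rho> *s y" using UU'y Vx s_eq by simp
  also have "\<dots> = (1 - \<rho>) *s y" by (simp add: Finite_Cartesian_Product.vec_eq_iff algebra_simps)
  finally have Ax: "A *v x = (1 - \<rho>) *s y" .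
  have A'Ax: "A' *v (A *v x) = x"
  proof -
    define d where "d = x - A' *v (A *v x)"
    have Ad: "A *v d = 0"
      unfolding d_def using mpA(1) by (simp add: matrix_vector_mult_diff_distrib matrix_vector_mul_assoc matrix_mul_assoc)
    hence Ud: "U *v d = 0" using split(3) unfolding mat_null_def by blast
    have "d \<bullet> (A' *v (A *v x)) = (A' *v (A *v d)) \<bullet> x"
      using sym_inner[OF mpA(4), of d x] by (simp add: matrix_vector_mul_assoc inner_commute)
    hence 1: "d \<bullet> (A' *v (A *v x)) = 0" using Ad by simp
    have "x = U' *v (U *v x)" using mpU(2) unfolding x_def
      by (simp add: matrix_vector_mul_assoc matrix_mul_assoc)
    hence "d \<bullet> x = d \<bullet> ((U' ** U) *v x)" by (simp add: matrix_vector_mul_assoc)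
    also have "\<dots> = ((U' ** U) *v d) \<bullet> x" using sym_inner[OF mpU(4), of d x] by simp
    also have "\<dots> = 0" using Ud by (simp add: matrix_vector_mul_assoc[symmetric])
    finally have 2: "d \<bullet> x = 0" .
    have "d \<bullet> d = 0" using 1 2 unfolding d_def by (simp add: inner_diff_right)
    hence "d = 0" by simp
    thus ?thesis unfolding d_def by simp
  qed
  have rho1: "\<rho> < 1"
  proof (rule ccontr)
    assume "\<not> \<rho> < 1"
    obtain i where xi: "x $ i \<noteq> 0" using x0 by (metis Finite_Cartesian_Product.vec_eq_iff Finite_Cartesian_Product.zero_index)
    from A'Ax have "x = A' *v ((1 - \<rho>) *s y)" unfolding Ax by (rule sym)
    hence "x = (1 - \<rho>) *s (A' *v y)" by (simp only: vector_scalar_commute)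
    hence "x $ i = (1 - \<rho>) * (A' *v y) $ i"
      using arg_cong[where f="\<lambda>v. v $ i"] by (simp only: vector_smult_component)
    moreover have "0 \<le> (A' *v y) $ i" using mv_nonneg[OF A'nn ynn] .
    ultimately have "x $ i \<le> 0" using \<open>\<not> \<rho> < 1\<close> by (simp add: mult_nonpos_nonneg)
    thus False using xi xnn unfolding nonneg_vec_def by (meson order.antisym)
  qed
  have "nonneg_vec (A *v x)" using Ax rho1 rho ynn unfolding nonneg_vec_def
    by (auto intro!: mult_left_le_one_le)
  moreover have "A *v x \<noteq> 0" using Ax rho1 y0 by (simp add: Finite_Cartesian_Product.vec_eq_iff)
  moreover have "nonneg_vec (V *v x)" using Vx s0 ynn unfolding nonneg_vec_def by simp
  moreover have "V *v x \<noteq> 0" using Vx s0 y0 by (simp add: Finite_Cartesian_Product.vec_eq_iff)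
  moreover have "C *v x = \<rho> *s x" using Cx s_eq by simp
  ultimately show ?thesis using xnn x0 unfolding C_def U'_def \<rho>_def by blast
qed

end
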